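(* Every simple binary matroid has a unique minimal tropical basis.
   Context: A matroid $M=([n],\mathscr C)$ is given by its circuit set $\mathscr C$. It is simple if every circuit has cardinality greater than $2$, and binary if it is representable over $\mathbb F_2$. Let ${\bf TP}^{n-1}$ be the tropical projective space over the tropical semifield $(\mathbb R\cup\{-\infty\},\max,+)$. For a circuit $C$, $V(C)$ is the set of points $x\in{\bf TP}^{n-1}$ such that the maximum of $\{x_i : i\in C\}$ is attained at least twice. For $B\subseteq\mathscr C$, set $V(B)=\bigcap_{C\in B}V(C)$. The Bergman fan of $M$ is $V(\mathscr C)$. A subset $B\subseteq\mathscr C$ is a tropical basis if $V(B)=V(\mathscr C)$. A tropical basis is minimal if no proper subset of it is a tropical basis. *)

theory Defs
  imports Main "HOL-Library.Extended_Real"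
begin

definition matroid_circuits :: "nat \<Rightarrow> nat set set \<Rightarrow> bool" where
  "matroid_circuits n \<C> \<longleftrightarrow>
     (\<forall>C\<in>\<C>. C \<subseteq> {..<n}) \<and>
     {} \<notin> \<C> \<and>
     (\<forall>C1\<in>\<C>. \<forall>C2\<in>\<C>. C1 \<subseteq> C2 \<longrightarrow> C1 = C2) \<and>
     (\<forall>C1\<in>\<C>. \<forall>C2\<in>\<C>. \<forall>e. C1 \<noteq> C2 \<and> e \<in> C1 \<inter> C2 \<longrightarrow>
        (\<exists>C3\<in>\<C>. C3 \<subseteq> (C1 \<union> C2) - {e}))"

definition simple_matroid :: "nat \<Rightarrow> nat set set \<Rightarrow> bool" where
  "simple_matroid n \<C> \<longleftrightarrow> (\<forall>C\<in>\<C>. card C > 2)"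

text \<open>Vectors in F_2^m: v i k is the k-th coordinate (k < m) of the vector attached to i.
  A finite family of vectors sums to zero over F_2 iff every coordinate has an even number of ones.\<close>

definition f2_sum_zero :: "nat \<Rightarrow> (nat \<Rightarrow> nat \<Rightarrow> bool) \<Rightarrow> nat set \<Rightarrow> bool" where
  "f2_sum_zero m v T \<longleftrightarrow> (\<forall>k<m. even (card {i\<in>T. v i k}))"

text \<open>The circuits of the vector matroid of v_0,...,v_{n-1} over F_2 are the minimal
  linearly dependent subsets, i.e. the minimal nonempty subsets summing to zero.\<close>

definition binary_matroid :: "nat \<Rightarrow> nat set set \<Rightarrow> bool" where
  "binary_matroid n \<C> \<longleftrightarrow>
     (\<exists>m v. \<C> = {T. T \<subseteq> {..<n} \<and> T \<noteq> {} \<and> f2_sum_zero m v T \<and>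
                     (\<forall>T'. T' \<subset> T \<and> T' \<noteq> {} \<longrightarrow> \<not> f2_sum_zero m v T')})"

text \<open>Representatives of points of TP^{n-1}: vectors in (R \<union> {-\<infinity>})^n, not all -\<infinity>
  (coordinates i \<ge> n are fixed to -\<infinity>). All sets below are invariant under adding a
  real constant to all coordinates, so equality of these sets of representatives is
  equality of the corresponding subsets of TP^{n-1}.\<close>

definition TP :: "nat \<Rightarrow> (nat \<Rightarrow> ereal) set" where
  "TP n = {x. (\<forall>i<n. x i \<noteq> \<infinity>) \<and> (\<exists>i<n. x i \<noteq> -\<infinity>) \<and> (\<forall>i. n \<le> i \<longrightarrow> x i = -\<infinity>)}"

definition Vc :: "nat \<Rightarrow> nat set \<Rightarrow> (nat \<Rightarrow> ereal) set" where
  "Vc n C = {x\<in>TP n. \<exists>i\<in>C. \<exists>j\<in>C. i \<noteq> j \<and> x i = Max (x ` C) \<and> x j = Max (x ` C)}"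

definition VB :: "nat \<Rightarrow> nat set set \<Rightarrow> (nat \<Rightarrow> ereal) set" where
  "VB n B = TP n \<inter> (\<Inter>C\<in>B. Vc n C)"

definition tropical_basis :: "nat \<Rightarrow> nat set set \<Rightarrow> nat set set \<Rightarrow> bool" where
  "tropical_basis n \<C> B \<longleftrightarrow> B \<subseteq> \<C> \<and> VB n B = VB n \<C>"

definition minimal_tropical_basis :: "nat \<Rightarrow> nat set set \<Rightarrow> nat set set \<Rightarrow> bool" where
  "minimal_tropical_basis n \<C> B \<longleftrightarrow>
     tropical_basis n \<C> B \<and> (\<forall>B'. B' \<subset> B \<longrightarrow> \<not> tropical_basis n \<C> B')"

end

theory Submission
  imports Defs
begin

definition bad :: "(nat \<Rightarrow> ereal) \<Rightarrow> nat set \<Rightarrow> bool" where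
  "bad x C \<longleftrightarrow> (\<exists>i\<in>C. \<forall>j\<in>C. j \<noteq> i \<longrightarrow> x j < x i)"

lemma bad_iff:
  assumes "x \<in> TP n" "finite C" "C \<noteq> {}"
  shows "x \<notin> Vc n C \<longleftrightarrow> bad x C"
proof
  assume nv: "x \<notin> Vc n C"
  show "bad x C"
  proof (rule ccontr)
    assume nb: "\<not> bad x C"
    have "Max (x ` C) \<in> x ` C" using assms by (intro Max_in) auto
    then obtain a where a: "a \<in> C" "x a = Max (x ` C)" by auto
    then obtain j where j: "j \<in> C" "j \<noteq> a" "\<not> x j < x a" using nb unfolding bad_def by blast
    have "x j \<le> Max (x ` C)" using j assms by auto
    hence "x j = Max (x ` C)" using j a by auto
    hence "x \<in> Vc n C" unfolding Vc_def using assms a j by blast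
    thus False using nv by blast
  qed
next
  assume b: "bad x C"
  then obtain a where a: "a \<in> C" "\<forall>j\<in>C. j \<noteq> a \<longrightarrow> x j < x a" unfolding bad_def by blast
  have "x a \<le> Max (x ` C)" using a assms by auto
  show "x \<notin> Vc n C"
  proof
    assume "x \<in> Vc n C"
    then obtain i j where ij: "i \<in> C" "j \<in> C" "i \<noteq> j" "x i = Max (x ` C)" "x j = Max (x ` C)"
      unfolding Vc_def by blast
    have "x a \<le> Max (x ` C)" using a assms by auto
    show False
    proof (cases "i = a")
      case True
      then have "x j < x a" using a ij by auto
      then show False using ij True by auto
    next
      case False
      then have "x i < x a" using a ij by auto
      then show False using ij \<open>x a \<le> Max (x ` C)\<close> by auto
    qed
  qed
qed

lemma even_sd:
  assumes "finite A" "finite B" "even (card {i\<in>A. P i})" "even (card {i\<in>B. P i})"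
  shows "even (card {i\<in>(A - B) \<union> (B - A). P i})"
proof -
  let ?A = "{i\<in>A. P i}" and ?B = "{i\<in>B. P i}"
  have fa: "finite ?A" "finite ?B" using assms by auto
  have eq: "{i\<in>(A - B) \<union> (B - A). P i} = (?A \<union> ?B) - (?A \<inter> ?B)" by auto
  have c1: "card ((?A \<union> ?B) - (?A \<inter> ?B)) = card (?A \<union> ?B) - card (?A \<inter> ?B)"
    by (rule card_Diff_subset) (use fa in auto)
  have c2: "card (?A \<union> ?B) + card (?A \<inter> ?B) = card ?A + card ?B"
    using card_Un_Int[OF fa] by simp
  have c3: "card (?A \<inter> ?B) \<le> card (?A \<union> ?B)" using fa by (intro card_mono) auto
  obtain p where p: "card ?A = 2 * p" using assms(3) by blast
  obtain q where q: "card ?B = 2 * q" using assms(4) by blast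
  have "card (?A \<union> ?B) - card (?A \<inter> ?B) = 2 * (p + q - card (?A \<inter> ?B))"
    using c2 c3 p q by linarith
  then show ?thesis unfolding eq c1 by simp
qed

lemma binary_sd:
  assumes bin: "binary_matroid n \<C>" and sm: "simple_matroid n \<C>"
    and C: "C \<in> \<C>" and D: "D \<in> \<C>" and k: "k \<notin> C" "k \<in> D" and sub: "D \<subseteq> C \<union> {k}"
  shows "(C - D) \<union> {k} \<in> \<C>"
proof -
  obtain m v where Ceq: "\<C> = {T. T \<subseteq> {..<n} \<and> T \<noteq> {} \<and> f2_sum_zero m v T \<and>
                     (\<forall>T'. T' \<subset> T \<and> T' \<noteq> {} \<longrightarrow> \<not> f2_sum_zero m v T')}"
    using bin unfolding binary_matroid_def by blast
  let ?Z = "f2_sum_zero m v"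
  have Cp: "C \<subseteq> {..<n}" "?Z C" "\<forall>T'. T' \<subset> C \<and> T' \<noteq> {} \<longrightarrow> \<not> ?Z T'"
    using C Ceq by auto
  have Dp: "D \<subseteq> {..<n}" "?Z D" using D Ceq by auto
  have fin: "finite C" "finite D"
    by (rule finite_subset[OF Cp(1)], simp) (rule finite_subset[OF Dp(1)], simp)
  have sdZ: "?Z ((A - B) \<union> (B - A))" if "finite A" "finite B" "?Z A" "?Z B" for A B
    unfolding f2_sum_zero_def
  proof (intro allI impI)
    fix q assume "q < m"
    then show "even (card {i \<in> (A - B) \<union> (B - A). v i q})"
      using even_sd[OF that(1,2), of "\<lambda>i. v i q"] that(3,4) unfolding f2_sum_zero_def by simp
  qed
  have cD: "card D > 2" using D sm unfolding simple_matroid_def by auto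
  obtain j where j: "j \<in> D" "j \<noteq> k"
  proof -
    have "D \<noteq> {k}" using cD by auto
    then show ?thesis using that k by blast
  qed
  have jC: "j \<in> C" using j sub by auto
  let ?D' = "(C - D) \<union> {k}"
  have eqD': "?D' = (C - D) \<union> (D - C)" using k sub by auto
  have ZD': "?Z ?D'" unfolding eqD' using sdZ fin Cp Dp by blast
  have finD': "finite ?D'" using fin by auto
  have minD': "\<not> ?Z T" if T: "T \<subset> ?D'" "T \<noteq> {}" for T
  proof
    assume ZT: "?Z T"
    have finT: "finite T" using T finD' by (meson finite_subset psubset_imp_subset)
    show False
    proof (cases "k \<in> T")
      case False
      then have "T \<subset> C" using T j jC by auto
      then show False using Cp ZT T by blast
    next
      case True
      let ?T' = "(T - D) \<union> (D - T)"
      have ZT': "?Z ?T'" using sdZ finT fin ZT Dp by blast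
      have T'C: "?T' \<subseteq> C" using T True sub k by auto
      show False
      proof (cases "?T' = {}")
        case True
        then have "T = D" by auto
        then show False using T j jC by auto
      next
        case False
        then have "?T' = C" using Cp ZT' T'C by blast
        then have "T = ?D'" using eqD' by blast
        then show False using T by auto
      qed
    qed
  qed
  have subD': "?D' \<subseteq> {..<n}" using Cp(1) Dp(1) k(2) by blast
  have "?D' \<in> {T. T \<subseteq> {..<n} \<and> T \<noteq> {} \<and> f2_sum_zero m v T \<and>
                     (\<forall>T'. T' \<subset> T \<and> T' \<noteq> {} \<longrightarrow> \<not> f2_sum_zero m v T')}"
    using subD' ZD' minD' by blast
  then show ?thesis by (simp only: Ceq)
qed

lemma essential:
  assumes mc: "matroid_circuits n \<C>" and sm: "simple_matroid n \<C>" and bin: "binary_matroid n \<C>"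
    and x: "x \<in> TP n" and C: "C \<in> \<C>" and bC: "bad x C"
    and minc: "\<forall>C'\<in>\<C>. bad x C' \<longrightarrow> card C \<le> card C'"
  shows "VB n (\<C> - {C}) \<noteq> VB n \<C>"
proof -
  note mcp = mc[unfolded matroid_circuits_def]
  have sub_n: "\<And>D. D \<in> \<C> \<Longrightarrow> D \<subseteq> {..<n}" using conjunct1[OF mcp] by blast
  have ne: "\<And>D. D \<in> \<C> \<Longrightarrow> D \<noteq> {}" using conjunct1[OF conjunct2[OF mcp]] by blast
  have fin: "\<And>D. D \<in> \<C> \<Longrightarrow> finite D" using sub_n by (meson finite_lessThan finite_subset)
  have c3: "\<And>D. D \<in> \<C> \<Longrightarrow> card D > 2" using sm unfolding simple_matroid_def by blast
  have anti: "\<And>D. D \<in> \<C> \<Longrightarrow> D \<subseteq> C \<Longrightarrow> D = C" using conjunct1[OF conjunct2[OF conjunct2[OF mcp]]] C by blast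
  obtain i where i: "i \<in> C" "\<forall>j\<in>C. j \<noteq> i \<longrightarrow> x j < x i" using bC unfolding bad_def by blast
  have iN: "i < n" using i sub_n C by blast
  define y :: "nat \<Rightarrow> ereal" where "y = (\<lambda>j. if j < n then (if j \<in> C - {i} then 0 else 1) else -\<infinity>)"
  have yTP: "y \<in> TP n" unfolding TP_def y_def using iN by auto
  have "\<forall>j\<in>C. j \<noteq> i \<longrightarrow> y j < y i"
  proof (intro ballI impI)
    fix j assume "j \<in> C" "j \<noteq> i"
    then show "y j < y i" using sub_n[OF C] i unfolding y_def by auto
  qed
  then have "bad y C" unfolding bad_def using i(1) by blast
  then have yC: "y \<notin> Vc n C" using bad_iff[OF yTP fin[OF C] ne[OF C]] by blast
  have yD: "y \<in> Vc n D" if D: "D \<in> \<C> - {C}" for D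
  proof (rule ccontr)
    assume "y \<notin> Vc n D"
    then have "bad y D" using bad_iff[OF yTP fin ne] D by blast
    then obtain k where k: "k \<in> D" "\<forall>j\<in>D. j \<noteq> k \<longrightarrow> y j < y k" unfolding bad_def by blast
    have Dn: "D \<subseteq> {..<n}" using sub_n D by blast
    have cD: "card D > 2" using c3 D by blast
    obtain j0 where j0: "j0 \<in> D" "j0 \<noteq> k"
    proof -
      have "D \<noteq> {k}" using cD by auto
      then show ?thesis using that k by blast
    qed
    have "y j0 < y k" using k j0 by blast
    then have yk: "y k = 1" using Dn j0 k unfolding y_def by (auto split: if_splits)
    then have kC: "k \<notin> C - {i}" using Dn k unfolding y_def by (auto split: if_splits)
    have Dsub: "D - {k} \<subseteq> C - {i}"
    proof
      fix j assume j: "j \<in> D - {k}"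
      then have "y j < 1" using k yk by auto
      then show "j \<in> C - {i}" using Dn j unfolding y_def by (auto split: if_splits)
    qed
    show False
    proof (cases "k = i")
      case True
      then have "D \<subseteq> C" using Dsub i by auto
      then show False using anti D by blast
    next
      case False
      then have kC': "k \<notin> C" using kC by blast
      have DCk: "D \<subseteq> C \<union> {k}" using Dsub by auto
      let ?D' = "(C - D) \<union> {k}"
      have D'C: "?D' \<in> \<C>" using binary_sd[OF bin sm C _ kC' k(1) DCk] D by blast
      have finC: "finite C" using fin C by blast
      have cardC: "card C = card (C - D) + card (C \<inter> D)"
      proof -
        have "card C = card ((C - D) \<union> (C \<inter> D))" by (simp add: Un_Diff_Int)
        also have "\<dots> = card (C - D) + card (C \<inter> D)" using finC by (intro card_Un_disjoint) auto
        finally show ?thesis .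
      qed
      have cardD': "card ?D' = card (C - D) + 1" using finC kC' by simp
      have "D = insert k (C \<inter> D)" using DCk k by auto
      then have cardD: "card D = card (C \<inter> D) + 1" using finC kC' by (metis Int_iff add.commute card_insert_disjoint finite_Int plus_1_eq_Suc)
      have "card ?D' > 2" using c3 D'C by blast
      have lt1: "card D < card C" using cardC cardD' cardD \<open>card ?D' > 2\<close> by linarith
      have lt2: "card ?D' < card C" using cardC cardD' cardD cD by linarith
      have iD: "i \<notin> D" using Dsub False by blast
      show False
      proof (cases "x k < x i")
        case True
        have iD': "i \<in> ?D'" using i(1) iD by blast
        have "\<forall>j\<in>?D'. j \<noteq> i \<longrightarrow> x j < x i" using True i(2) by blast
        then have "bad x ?D'" unfolding bad_def using iD' by blast
        then show False using minc D'C lt2 by fastforce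
      next
        case False
        have "\<forall>j\<in>D. j \<noteq> k \<longrightarrow> x j < x k"
        proof (intro ballI impI)
          fix j assume "j \<in> D" "j \<noteq> k"
          then have "j \<in> C - {i}" using Dsub by blast
          then have "x j < x i" using i by blast
          then show "x j < x k" using False by auto
        qed
        then have "bad x D" unfolding bad_def using k(1) by blast
        then show False using minc D lt1 by fastforce
      qed
    qed
  qed
  have "y \<in> VB n (\<C> - {C})" unfolding VB_def using yTP yD by blast
  moreover have "y \<notin> VB n \<C>" unfolding VB_def using yC C by blast
  ultimately show ?thesis by blast
qed

theorem theorem4:
  fixes n :: nat and \<C> :: "nat set set"
  assumes "matroid_circuits n \<C>"
    and "simple_matroid n \<C>"
    and "binary_matroid n \<C>"
  shows "\<exists>!B. minimal_tropical_basis n \<C> B"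
proof -
  note mcp = assms(1)[unfolded matroid_circuits_def]
  have sub_n: "\<And>D. D \<in> \<C> \<Longrightarrow> D \<subseteq> {..<n}" using conjunct1[OF mcp] by blast
  have ne: "\<And>D. D \<in> \<C> \<Longrightarrow> D \<noteq> {}" using conjunct1[OF conjunct2[OF mcp]] by blast
  have fin: "\<And>D. D \<in> \<C> \<Longrightarrow> finite D" using sub_n by (meson finite_lessThan finite_subset)
  have anti: "\<And>B B'. B \<subseteq> B' \<Longrightarrow> VB n B' \<subseteq> VB n B" unfolding VB_def by blast
  define B0 where "B0 = {C\<in>\<C>. VB n (\<C> - {C}) \<noteq> VB n \<C>}"
  have tb: "tropical_basis n \<C> B0"
    unfolding tropical_basis_def
  proof
    show "B0 \<subseteq> \<C>" unfolding B0_def by blast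
    show "VB n B0 = VB n \<C>"
    proof
      show "VB n \<C> \<subseteq> VB n B0" using anti \<open>B0 \<subseteq> \<C>\<close> by blast
      show "VB n B0 \<subseteq> VB n \<C>"
      proof
        fix x assume xB: "x \<in> VB n B0"
        then have x: "x \<in> TP n" unfolding VB_def by blast
        show "x \<in> VB n \<C>"
        proof (rule ccontr)
          assume "x \<notin> VB n \<C>"
          then obtain C where C: "C \<in> \<C>" "x \<notin> Vc n C" unfolding VB_def using x by blast
          then have "bad x C" using bad_iff[OF x fin[OF C(1)] ne[OF C(1)]] by blast
          then have "\<exists>m. \<exists>C\<in>\<C>. bad x C \<and> card C = m" using C by blast
          then obtain m where m: "\<exists>C\<in>\<C>. bad x C \<and> card C = m"
            and mm: "\<forall>m'<m. \<not> (\<exists>C\<in>\<C>. bad x C \<and> card C = m')"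
            using exists_least_iff[of "\<lambda>m. \<exists>C\<in>\<C>. bad x C \<and> card C = m"] by blast
          then obtain C0 where C0: "C0 \<in> \<C>" "bad x C0" "card C0 = m" by blast
          have "\<forall>C'\<in>\<C>. bad x C' \<longrightarrow> card C0 \<le> card C'"
          proof (intro ballI impI)
            fix C' assume "C' \<in> \<C>" "bad x C'"
            then have "\<not> card C' < m" using mm by blast
            then show "card C0 \<le> card C'" using C0(3) by simp
          qed
          then have "VB n (\<C> - {C0}) \<noteq> VB n \<C>" using essential[OF assms x C0(1,2)] by blast
          then have "C0 \<in> B0" unfolding B0_def using C0 by blast
          then have "x \<in> Vc n C0" using xB unfolding VB_def by blast
          then show False using bad_iff[OF x fin[OF C0(1)] ne[OF C0(1)]] C0(2) by blast
        qed
      qed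
    qed
  qed
  have contain: "B0 \<subseteq> B" if "tropical_basis n \<C> B" for B
  proof
    fix C assume C: "C \<in> B0"
    show "C \<in> B"
    proof (rule ccontr)
      assume "C \<notin> B"
      then have "B \<subseteq> \<C> - {C}" using that unfolding tropical_basis_def by blast
      then have "VB n (\<C> - {C}) \<subseteq> VB n \<C>" using anti that unfolding tropical_basis_def by blast
      moreover have "VB n \<C> \<subseteq> VB n (\<C> - {C})" using anti by blast
      ultimately show False using C unfolding B0_def by blast
    qed
  qed
  show ?thesis
  proof (rule ex1I[of _ B0])
    show "minimal_tropical_basis n \<C> B0"
      unfolding minimal_tropical_basis_def
    proof (intro conjI allI impI)
      fix B' assume "B' \<subset> B0"
      then show "\<not> tropical_basis n \<C> B'" using contain by blast
    qed (rule tb)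
  next
    fix B assume "minimal_tropical_basis n \<C> B"
    then have tbB: "tropical_basis n \<C> B" and minB: "\<forall>B'. B' \<subset> B \<longrightarrow> \<not> tropical_basis n \<C> B'"
      unfolding minimal_tropical_basis_def by blast+
    show "B = B0"
    proof (rule ccontr)
      assume "B \<noteq> B0"
      then have "B0 \<subset> B" using contain[OF tbB] by blast
      then show False using minB tb by blast
    qed
  qed
qed

end
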